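(* Let $q\geq 3$ be a prime power. In $\mathrm{PG}(2,q^2)$ there exists a semioval $\mathcal{S}\subset\mathcal{H}_q$ of size $k$ for every integer $k$ satisfying $q^3+1\geq k\geq q^3-2q^2+4q+1$ if $q$ is even, and $q^3+1\geq k\geq q^3-2q^2+5q-2$ if $q$ is odd.
   Context: $\mathrm{PG}(2,q^2)$ is the Desarguesian projective plane over $\mathbb{F}_{q^2}$. $\mathcal{H}_q$ denotes the Hermitian curve, the set of points of $\mathrm{PG}(2,q^2)$ satisfying $X_2X_0^q+X_2^qX_0+X_1^{q+1}=0$ (it has $q^3+1$ points). A semioval is a non-empty pointset $\mathcal{S}$ such that for every $P\in\mathcal{S}$ there is a unique line $t_P$ with $\mathcal{S}\cap t_P=\{P\}$. *)

theory Defs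
  imports "HOL-Computational_Algebra.Primes"
begin

type_synonym 'a vec3 = "'a \<times> 'a \<times> 'a"

definition pt :: "('a::field) vec3 \<Rightarrow> 'a vec3 set" where
  "pt v = (case v of (x, y, z) \<Rightarrow> {(c * x, c * y, c * z) | c. c \<noteq> 0})"

definition pg_points :: "('a::field) vec3 set set" where
  "pg_points = {pt v | v. v \<noteq> (0, 0, 0)}"

definition pg_line :: "('a::field) vec3 \<Rightarrow> 'a vec3 set set" where
  "pg_line u = (case u of (a, b, c) \<Rightarrow>
     {P \<in> pg_points. \<exists>x y z. (x, y, z) \<in> P \<and> a * x + b * y + c * z = 0})"

definition pg_lines :: "('a::field) vec3 set set set" where
  "pg_lines = {pg_line u | u. u \<noteq> (0, 0, 0)}"

definition hermitian_curve :: "nat \<Rightarrow> ('a::field) vec3 set set" where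
  "hermitian_curve q = {pt (x0, x1, x2) | x0 x1 x2. (x0, x1, x2) \<noteq> (0, 0, 0) \<and>
       x2 * x0 ^ q + x2 ^ q * x0 + x1 ^ (q + 1) = 0}"

definition semioval :: "('a::field) vec3 set set \<Rightarrow> bool" where
  "semioval S \<longleftrightarrow> S \<noteq> {} \<and> S \<subseteq> pg_points \<and>
     (\<forall>P\<in>S. \<exists>!l. l \<in> pg_lines \<and> S \<inter> l = {P})"

end

theory Submission
  imports Defs "HOL-Computational_Algebra.Polynomial" "HOL-Number_Theory.Residues"
begin


lemma fiber_count:
  assumes "finite A" "\<And>c. c \<in> f ` A \<Longrightarrow> card {x\<in>A. f x = c} = d"
  shows "card A = card (f ` A) * d"
proof -
  have e: "A = (\<Union>c\<in>f`A. {x\<in>A. f x = c})" by auto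
  have "card (\<Union>c\<in>f`A. {x\<in>A. f x = c}) = (\<Sum>c\<in>f`A. card {x\<in>A. f x = c})"
    by (rule card_UN_disjoint) (use assms in auto)
  also have "\<dots> = (\<Sum>c\<in>f`A. d)" using assms(2) by simp
  finally show ?thesis using e by simp
qed

locale herm =
  fixes q :: nat and ty :: "'a::{finite,field} itself"
  assumes q3: "q \<ge> 3"
    and cardF: "card (UNIV :: 'a set) = q^2"
    and frob: "\<And>x y::'a. (x+y)^q = x^q + y^q"
begin

lemma pow_card: "(x::'a) ^ (q^2) = x"
proof (cases "x = 0")
  case True thus ?thesis using q3 by simp
next
  case False
  let ?n = "card (UNIV :: 'a set)"
  have n0: "?n > 0" using cardF q3 by simp
  have "x * (\<Prod>y\<in>UNIV-{0}. x * y) = x * x ^ (?n - 1) * \<Prod>(UNIV-{0})"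
    by (simp add: prod.distrib mult_ac card_Diff_subset)
  also have "x * x ^ (?n - 1) = x ^ Suc (?n - 1)"
    by (subst power_Suc) auto
  also have "Suc (?n - 1) = ?n" using n0 by simp
  also have "(\<Prod>y\<in>UNIV-{0}. x * y) = (\<Prod>y\<in>UNIV-{0}. y)"
    by (rule prod.reindex_bij_witness[of _ "\<lambda>y. y / x" "\<lambda>y. x * y"]) (use False in auto)
  finally show ?thesis using cardF by simp
qed

lemma frob_frob: "((x::'a)^q)^q = x"
  using pow_card[of x] by (simp add: power_mult[symmetric] power2_eq_square)

lemma q_pos: "q > 0" using q3 by simp

lemma frob_neg: "(-(x::'a))^q = - (x^q)"
proof -
  have "(x + -x)^q = x^q + (-x)^q" by (rule frob)
  hence "x^q + (-x)^q = 0" using q_pos by (simp add: zero_power)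
  thus ?thesis by (metis minus_unique)
qed

lemma frob_diff: "((x::'a) - y)^q = x^q - y^q"
  using frob[of x "-y"] frob_neg[of y] by simp

lemma frob_inj: "((x::'a)^q = y^q) = (x = y)"
  by (metis frob_frob)

definition Fix :: "'a set" where "Fix = {x. x^q = x}"

lemma Fix_diff: "a \<in> Fix \<Longrightarrow> b \<in> Fix \<Longrightarrow> a - b \<in> Fix"
  by (simp add: Fix_def frob_diff)

lemma card_roots_le_q:
  fixes c :: 'a
  shows "card {x::'a. x^q + c * x = 0} \<le> q"
proof -
  let ?p = "Polynomial.monom (1::'a) q + [:0, c:]"
  have dq: "degree ?p = q"
    using q3 by (subst degree_add_eq_left) (auto simp: degree_monom_eq degree_pCons_eq_if)
  hence "?p \<noteq> 0" using q3 by auto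
  hence "card {x. poly ?p x = 0} \<le> degree ?p" by (rule card_poly_roots_bound)
  moreover have "{x. poly ?p x = 0} = {x::'a. x^q + c * x = 0}"
    by (auto simp: poly_monom mult.commute)
  ultimately show ?thesis using dq by simp
qed

lemma Fix_le: "card Fix \<le> q"
proof -
  have "Fix = {x::'a. x^q + (-1) * x = 0}" by (auto simp: Fix_def algebra_simps)
  thus ?thesis using card_roots_le_q[of "-1"] by simp
qed

definition Tr :: "'a \<Rightarrow> 'a" where "Tr y = y + y^q"
definition Nm :: "'a \<Rightarrow> 'a" where "Nm y = y^q * y"

lemma Tr_add: "Tr (x + y) = Tr x + Tr y"
  by (simp add: Tr_def frob algebra_simps)

lemma Tr_Fix: "Tr y \<in> Fix"
  by (simp add: Tr_def Fix_def frob frob_frob add.commute)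

lemma Nm_Fix: "Nm y \<in> Fix"
  by (simp add: Nm_def Fix_def frob_frob power_mult_distrib mult.commute)

lemma Nm_mult: "Nm (x * y) = Nm x * Nm y"
  by (simp add: Nm_def power_mult_distrib mult_ac)

lemma Nm_0: "(Nm y = 0) = (y = 0)"
  using q_pos by (simp add: Nm_def)

lemma ker_Tr_le: "card {y. Tr y = 0} \<le> q"
proof -
  have "{y. Tr y = 0} = {x::'a. x^q + 1 * x = 0}" by (auto simp: Tr_def add.commute)
  thus ?thesis using card_roots_le_q[of 1] by simp
qed

lemma Tr_fiber: "card {y. Tr y = Tr y0} = card {y. Tr y = 0}"
proof -
  have "{y. Tr y = Tr y0} = (\<lambda>y. y + y0) ` {y. Tr y = 0}"
  proof (auto simp: image_iff)
    fix y assume "Tr y = Tr y0"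
    hence "Tr (y - y0) = 0" using Tr_add[of "y - y0" y0] by simp
    thus "\<exists>x. Tr x = 0 \<and> y = x + y0" by (intro exI[of _ "y - y0"]) auto
  next
    fix x assume "Tr x = 0" thus "Tr (x + y0) = Tr y0" by (simp add: Tr_add)
  qed
  moreover have "inj ((\<lambda>y. y + y0))" by (auto simp: inj_def)
  ultimately show ?thesis by (simp add: card_image inj_on_subset)
qed

lemma Tr_counts: "card {y. Tr y = 0} = q \<and> range Tr = Fix \<and> card Fix = q"
proof -
  have "card (UNIV :: 'a set) = card (Tr ` UNIV) * card {y. Tr y = 0}"
    by (rule fiber_count) (auto simp: Tr_fiber)
  hence e: "q^2 = card (range Tr) * card {y. Tr y = 0}" using cardF by simp
  have s: "range Tr \<subseteq> Fix" using Tr_Fix by auto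
  have i: "card (range Tr) \<le> q" using card_mono[OF _ s] Fix_le by simp
  have k: "card {y. Tr y = 0} \<le> q" by (rule ker_Tr_le)
  have "card (range Tr) = q \<and> card {y. Tr y = 0} = q"
  proof (rule ccontr)
    assume "\<not> ?thesis"
    hence "card (range Tr) < q \<or> card {y. Tr y = 0} < q" using i k by auto
    hence "card (range Tr) * card {y. Tr y = 0} < q * q"
    proof (elim disjE)
      assume "card (range Tr) < q" thus ?thesis using k q_pos by (meson le_less_trans mult_le_mono2 mult_less_mono1)
    next
      assume "card {y. Tr y = 0} < q" thus ?thesis using i q_pos by (meson le_less_trans mult_le_mono1 mult_less_mono2)
    qed
    thus False using e by (simp add: power2_eq_square)
  qed
  moreover hence "range Tr = Fix" using s Fix_le
    by (intro card_seteq) auto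
  ultimately show ?thesis by simp
qed

lemma card_Fix: "card Fix = q" using Tr_counts by simp

lemma Tr_fiber_card: "c \<in> Fix \<Longrightarrow> card {y. Tr y = c} = q"
  using Tr_counts Tr_fiber by (metis rangeE)

lemma Nm_fiber: "z0 \<noteq> 0 \<Longrightarrow> card {z. Nm z = Nm z0} = card {w. Nm w = 1}"
proof -
  assume z0: "z0 \<noteq> 0"
  have "{z. Nm z = Nm z0} = (\<lambda>w. w * z0) ` {w. Nm w = 1}"
  proof (auto simp: image_iff Nm_mult)
    fix z assume h: "Nm z = Nm z0"
    have "Nm (z / z0) = 1" using h z0 Nm_mult[of "z/z0" z0] Nm_0[of z0] by (simp add: field_simps)
    thus "\<exists>x. Nm x = 1 \<and> z = x * z0" using z0 by (intro exI[of _ "z / z0"]) auto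
  qed
  moreover have "inj ((\<lambda>w. w * z0))" using z0 by (auto simp: inj_def)
  ultimately show ?thesis by (simp add: card_image inj_on_subset)
qed

lemma Nm_ker_ge: "card {w. Nm w = 1} \<ge> q + 1"
proof -
  let ?A = "UNIV - {0::'a}"
  have fc: "card ?A = card (Nm ` ?A) * card {w. Nm w = 1}"
  proof (rule fiber_count)
    fix c assume "c \<in> Nm ` ?A"
    then obtain z0 where z0: "z0 \<noteq> 0" "c = Nm z0" by auto
    have nz: "Nm z0 \<noteq> 0" using z0(1) Nm_0 by blast
    have "{x\<in>?A. Nm x = c} = {z. Nm z = Nm z0}"
      using nz z0(2) by (auto simp: Nm_def zero_power q_pos)
    thus "card {x\<in>?A. Nm x = c} = card {w. Nm w = 1}" using Nm_fiber z0 by simp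
  qed simp
  have cA: "card ?A = q^2 - 1" using cardF by (simp add: card_Diff_subset)
  have sb: "Nm ` ?A \<subseteq> Fix - {0}" by (auto simp: Nm_Fix Nm_0)
  have z: "(0::'a) \<in> Fix" by (simp add: Fix_def zero_power q_pos)
  have cF1: "card (Fix - {0}) = q - 1" using card_Fix z by (simp add: card_Diff_singleton)
  have "card (Nm ` ?A) \<le> q - 1" using card_mono[OF _ sb] cF1 by simp
  hence "q^2 - 1 \<le> (q - 1) * card {w. Nm w = 1}"
    using fc cA mult_le_mono1[of "card (Nm ` ?A)" "q - 1" "card {w. Nm w = 1}"] by simp
  moreover have "q^2 - 1 = (q - 1) * (q + 1)" using q3
    by (simp add: power2_eq_square algebra_simps)
  ultimately have "(q - 1) * (q + 1) \<le> (q - 1) * card {w. Nm w = 1}" by simp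
  moreover have "q - 1 > 0" using q3 by simp
  ultimately show ?thesis using mult_le_cancel1[of "q - 1" "q + 1" "card {w. Nm w = 1}"] by blast
qed

end


definition inf_pt :: "('a::field) vec3 set" where "inf_pt = pt (0, 0, 1)"
definition ptA :: "('a::field) \<Rightarrow> 'a \<Rightarrow> 'a vec3 set" where "ptA x y = pt (1, x, y)"

lemma mem_pt: "((a, b, c) \<in> pt (x, y, z)) = (\<exists>d. d \<noteq> 0 \<and> a = d*x \<and> b = d*y \<and> c = d*z)"
  by (auto simp: pt_def)

lemma self_mem_pt: "((x, y, z) :: ('a::field) vec3) \<in> pt (x, y, z)"
  by (auto simp: mem_pt intro: exI[of _ 1])

lemma ptA_inj: "ptA x y = ptA x' y' \<Longrightarrow> x = x' \<and> y = y'"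
proof -
  assume "ptA x y = ptA x' y'"
  hence "(1, x', y') \<in> ptA x y" using self_mem_pt unfolding ptA_def by metis
  then obtain d where "d \<noteq> 0" "1 = d" "x' = d * x" "y' = d * y" by (auto simp: ptA_def mem_pt)
  thus ?thesis by simp
qed

lemma ptA_ne_inf: "ptA x y \<noteq> inf_pt"
proof
  assume "ptA x y = inf_pt"
  hence "(1, x, y) \<in> inf_pt" using self_mem_pt unfolding ptA_def by metis
  thus False by (auto simp: inf_pt_def mem_pt)
qed

lemma pt_in_points: "v \<noteq> (0,0,0) \<Longrightarrow> pt v \<in> pg_points"
  unfolding pg_points_def by blast

lemma on_line:
  assumes "(x, y, z) \<noteq> ((0, 0, 0) :: ('a::field) vec3)"
  shows "(pt (x, y, z) \<in> pg_line (a, b, c)) = (a*x + b*y + c*z = 0)"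
proof
  assume "pt (x, y, z) \<in> pg_line (a, b, c)"
  then obtain x' y' z' where m: "(x', y', z') \<in> pt (x, y, z)" "a*x' + b*y' + c*z' = 0"
    by (auto simp: pg_line_def)
  then obtain d where d: "d \<noteq> 0" "x' = d*x" "y' = d*y" "z' = d*z" by (auto simp: mem_pt)
  hence "d * (a*x + b*y + c*z) = 0" using m(2) by (simp add: algebra_simps)
  thus "a*x + b*y + c*z = 0" using d(1) by simp
next
  assume "a*x + b*y + c*z = 0"
  thus "pt (x, y, z) \<in> pg_line (a, b, c)"
    using assms self_mem_pt[of x y z] by (auto simp: pg_line_def intro!: pt_in_points)
qed

lemma line_scale:
  assumes "(d::'a::field) \<noteq> 0"
  shows "pg_line (d*a, d*b, d*c) = pg_line (a, b, c)"
proof -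
  have "P \<in> pg_line (d*a, d*b, d*c) \<longleftrightarrow> P \<in> pg_line (a, b, c)" for P
  proof (cases "P \<in> pg_points")
    case True
    then obtain x y z where P: "P = pt (x, y, z)" "(x, y, z) \<noteq> (0,0,0)" by (auto simp: pg_points_def)
    have "(d*a*x + d*b*y + d*c*z = 0) = (a*x + b*y + c*z = 0)"
    proof -
      have "d*a*x + d*b*y + d*c*z = d * (a*x + b*y + c*z)" by (simp add: algebra_simps)
      thus ?thesis using assms by simp
    qed
    thus ?thesis using P on_line by metis
  next
    case False thus ?thesis by (auto simp: pg_line_def)
  qed
  thus ?thesis by blast
qed

lemma line_in_lines: "u \<noteq> (0,0,0) \<Longrightarrow> pg_line u \<in> pg_lines"
  unfolding pg_lines_def by blast

context herm
begin

definition Aff :: "('a \<times> 'a) set" where "Aff = {(x, y). Tr y + Nm x = 0}"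

lemma key_id: "Tr (a*x + b) + Nm x = Nm (x + a^q) - Nm a + Tr b"
  by (simp add: Tr_def Nm_def frob frob_frob power_mult_distrib algebra_simps)

lemma inf_in_H: "(inf_pt :: 'a vec3 set) \<in> hermitian_curve q"
  unfolding hermitian_curve_def inf_pt_def
  by (rule CollectI, rule exI[of _ 0], rule exI[of _ 0], rule exI[of _ 1]) (simp add: q_pos zero_power)

lemma ptA_in_H: "(x, y) \<in> Aff \<Longrightarrow> ptA x y \<in> hermitian_curve q"
  unfolding hermitian_curve_def ptA_def Aff_def
  by (rule CollectI, rule exI[of _ 1], rule exI[of _ x], rule exI[of _ y])
     (simp add: Tr_def Nm_def power_Suc2 algebra_simps)

end


context herm
begin

lemma Nm_zero_x: "Nm (x0 + (-(x0^q))^q) = 0"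
  by (simp add: frob_neg frob_frob Nm_0)

lemma semioval_constr:
  fixes G :: "('a \<times> 'a) set" and B :: "'a vec3 set set"
  assumes GA: "G \<subseteq> Aff" and B: "B \<subseteq> {inf_pt}"
    and h1: "\<And>x y. (x, y) \<in> G \<Longrightarrow> inf_pt \<notin> B \<Longrightarrow> \<exists>y'. y' \<noteq> y \<and> (x, y') \<in> G"
    and h2: "inf_pt \<in> B \<Longrightarrow> \<forall>x. \<exists>y. (x, y) \<in> G"
    and h3: "\<And>a b x0. (x0, a*x0 + b) \<in> G \<Longrightarrow> Nm (x0 + a^q) \<noteq> 0 \<Longrightarrow> \<exists>x. x \<noteq> x0 \<and> (x, a*x + b) \<in> G"
    and ne: "B \<union> (\<lambda>(x, y). ptA x y) ` G \<noteq> {}"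
  shows "semioval (B \<union> (\<lambda>(x, y). ptA x y) ` G)"
proof -
  define S where "S = B \<union> (\<lambda>(x, y). ptA x y) ` G"
  have inf_pts: "(inf_pt :: 'a vec3 set) \<in> pg_points" unfolding inf_pt_def by (rule pt_in_points) simp
  have ptA_pts: "ptA x y \<in> pg_points" for x y :: 'a unfolding ptA_def by (rule pt_in_points) simp
  have sub: "S \<subseteq> pg_points" using B inf_pts ptA_pts by (auto simp: S_def)
  have inf_on: "(inf_pt \<in> pg_line (a, b, c)) = (c = 0)" for a b c :: 'a
    unfolding inf_pt_def by (subst on_line) auto
  have ptA_on: "(ptA x y \<in> pg_line (a, b, c)) = (a + b*x + c*y = 0)" for a b c x y :: 'a
    unfolding ptA_def by (subst on_line) auto
  have SE: "Q \<in> S \<longleftrightarrow> (Q = inf_pt \<and> inf_pt \<in> B) \<or> (\<exists>x y. (x, y) \<in> G \<and> Q = ptA x y)" for Q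
    using B by (auto simp: S_def)
  have tang: "\<exists>!l. l \<in> pg_lines \<and> S \<inter> l = {P}" if P: "P \<in> S" for P
  proof (cases "P = inf_pt \<and> inf_pt \<in> B")
    case True
    hence PI: "P = inf_pt" "inf_pt \<in> B" by auto
    let ?l0 = "pg_line (1::'a, 0, 0)"
    show ?thesis
    proof (rule ex1I[of _ ?l0])
      show "?l0 \<in> pg_lines \<and> S \<inter> ?l0 = {P}"
        using PI by (auto simp: line_in_lines SE inf_on ptA_on)
    next
      fix l assume l: "l \<in> pg_lines \<and> S \<inter> l = {P}"
      then obtain \<alpha> \<beta> \<gamma> where u: "l = pg_line (\<alpha>, \<beta>, \<gamma>)" "(\<alpha>, \<beta>, \<gamma>) \<noteq> (0::'a,0,0)"
        by (auto simp: pg_lines_def)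
      have "P \<in> l" using l by auto
      hence g: "\<gamma> = 0" using PI u inf_on by simp
      show "l = ?l0"
      proof (cases "\<beta> = 0")
        case True
        hence "\<alpha> \<noteq> 0" using u g by auto
        thus ?thesis using line_scale[of \<alpha> 1 0 0] u g True by simp
      next
        case False
        obtain y where "(- \<alpha> / \<beta>, y) \<in> G" using h2 PI by blast
        hence "ptA (- \<alpha> / \<beta>) y \<in> S \<inter> l" using u g False by (auto simp: S_def ptA_on)
        hence "ptA (- \<alpha> / \<beta>) y = inf_pt" using l PI by auto
        thus ?thesis using ptA_ne_inf by blast
      qed
    qed
  next
    case False
    then obtain x0 y0 where P0: "(x0, y0) \<in> G" "P = ptA x0 y0" using P SE by blast
    define a0 where "a0 = - (x0^q)"
    define b0 where "b0 = y0 - a0 * x0"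
    let ?l0 = "pg_line (b0, a0, -1)"
    have a0q: "x0 + a0^q = 0" by (simp add: a0_def frob_neg frob_frob)
    have A0: "Nm (x0 + a0^q) - Nm a0 + Tr b0 = 0"
      using GA P0 key_id[of a0 x0 b0] by (auto simp: Aff_def b0_def)
    show ?thesis
    proof (rule ex1I[of _ ?l0])
      have "S \<inter> ?l0 \<subseteq> {P}"
      proof
        fix Q assume Q: "Q \<in> S \<inter> ?l0"
        show "Q \<in> {P}"
        proof (cases "Q = inf_pt \<and> inf_pt \<in> B")
          case True thus ?thesis using Q inf_on by auto
        next
          case False
          then obtain x y where xy: "(x, y) \<in> G" "Q = ptA x y" using Q SE by blast
          hence "b0 + a0 * x - y = 0" using Q ptA_on by auto
          hence y: "y = a0 * x + b0" by (simp add: algebra_simps)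
          have "Tr y + Nm x = 0" using xy GA by (auto simp: Aff_def)
          hence k1: "Nm (x + a0^q) - Nm a0 + Tr b0 = 0" using key_id[of a0 x b0] y by simp
          have k2: "Nm a0 = Tr b0" using A0 a0q by (simp add: Nm_def zero_power q_pos)
          have "Nm (x + a0^q) = 0" using k1 k2 by simp
          hence "x = x0" using a0q Nm_0 by (simp add: eq_neg_iff_add_eq_0 add.commute)
            (metis add_right_cancel)
          thus ?thesis using xy y P0 by (simp add: b0_def)
        qed
      qed
      moreover have "P \<in> ?l0" using P0 ptA_on by (simp add: b0_def)
      ultimately show "?l0 \<in> pg_lines \<and> S \<inter> ?l0 = {P}"
        using P by (auto intro: line_in_lines)
    next
      fix l assume l: "l \<in> pg_lines \<and> S \<inter> l = {P}"
      then obtain \<alpha> \<beta> \<gamma> where u: "l = pg_line (\<alpha>, \<beta>, \<gamma>)" "(\<alpha>, \<beta>, \<gamma>) \<noteq> (0::'a,0,0)"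
        by (auto simp: pg_lines_def)
      have "P \<in> l" using l by auto
      hence eq: "\<alpha> + \<beta> * x0 + \<gamma> * y0 = 0" using u P0 ptA_on by simp
      have other: "False" if "Q \<in> S" "Q \<in> l" "Q \<noteq> P" for Q using that l by auto
      show "l = ?l0"
      proof (cases "\<gamma> = 0")
        case g: True
        show ?thesis
        proof (cases "\<beta> = 0")
          case True thus ?thesis using g eq u by simp
        next
          case False
          show ?thesis
          proof (cases "inf_pt \<in> B")
            case True
            have "inf_pt \<in> S" using True by (simp add: S_def)
            moreover have "inf_pt \<in> l" using u g inf_on by simp
            moreover have "inf_pt \<noteq> P" using P0 ptA_ne_inf by metis
            ultimately show ?thesis using other by blast
          next
            case False
            then obtain y' where y': "y' \<noteq> y0" "(x0, y') \<in> G" using h1 P0 by blast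
            have "ptA x0 y' \<in> S" using y' by (auto simp: S_def)
            moreover have "ptA x0 y' \<in> l" using u g eq ptA_on by simp
            moreover have "ptA x0 y' \<noteq> P" using P0 y' ptA_inj by blast
            ultimately show ?thesis using other by blast
          qed
        qed
      next
        case False
        define a where "a = - \<beta> / \<gamma>"
        define b where "b = - \<alpha> / \<gamma>"
        have lab: "l = pg_line (b, a, -1)"
          using line_scale[of "-1/\<gamma>" \<alpha> \<beta> \<gamma>] u False by (simp add: a_def b_def)
        have y0: "y0 = a * x0 + b" using eq False
          by (simp add: a_def b_def field_simps) (metis add.commute add_eq_0_iff)
        show ?thesis
        proof (cases "Nm (x0 + a^q) = 0")
          case True
          hence "a^q = - x0" using Nm_0 by (simp add: eq_neg_iff_add_eq_0 add.commute)
          hence "a = a0" by (metis frob_frob frob_neg a0_def)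
          moreover hence "b = b0" using y0 by (simp add: b0_def)
          ultimately show ?thesis using lab by simp
        next
          case nz: False
          obtain x where x: "x \<noteq> x0" "(x, a*x + b) \<in> G" using h3[of x0 a b] nz y0 P0 by auto
          have "ptA x (a*x + b) \<in> S" using x by (auto simp: S_def)
          moreover have "ptA x (a*x + b) \<in> l" using lab ptA_on by simp
          moreover have "ptA x (a*x + b) \<noteq> P" using P0 x ptA_inj by blast
          ultimately show ?thesis using other by blast
        qed
      qed
    qed
  qed
  show ?thesis unfolding semioval_def using ne sub tang by (simp add: S_def)
qed

end


lemma removal:
  fixes V :: "'i \<Rightarrow> 'b set" and q :: nat
  assumes "finite I" "I \<noteq> {}" "\<And>i. i \<in> I \<Longrightarrow> finite (V i) \<and> card (V i) = q" "q \<ge> 3"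
  shows "m \<le> card I * q - 2 \<Longrightarrow> \<exists>R \<subseteq> Sigma I V. card R = m \<and> (\<forall>i\<in>I. card {y. (i, y) \<in> R} \<noteq> q - 1)"
  using assms(1,2,3)
proof (induction I arbitrary: m rule: finite_ne_induct)
  case (singleton i)
  have "m \<le> card (V i)" using singleton by simp
  then obtain W where W: "W \<subseteq> V i" "card W = m" by (meson obtain_subset_with_card_n)
  have col: "{y. (i, y) \<in> {i} \<times> W} = W" by auto
  show ?case
    by (rule exI[of _ "{i} \<times> W"]) (use W col singleton assms(4) in \<open>auto simp: card_cartesian_product\<close>)
next
  case (insert i F)
  have Vi: "finite (V i)" "card (V i) = q" using insert by auto
  have cF: "card F \<ge> 1" using insert by (simp add: Suc_le_eq card_gt_0_iff)
  have cI: "card (insert i F) = card F + 1" using insert by simp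
  obtain s m' where sm: "m = s + m'" "s \<le> q" "s \<noteq> q - 1" "m' \<le> card F * q - 2"
  proof (cases "m \<ge> q")
    case True
    have "m - q \<le> card F * q - 2" using insert.prems cI by (simp add: algebra_simps)
    thus ?thesis using that[of q "m - q"] True assms(4) by simp
  next
    case False
    have one: "1 \<le> card F * q - 2"
    proof -
      have "1 * 3 \<le> card F * q" using cF assms(4) by (intro mult_le_mono) auto
      thus ?thesis by simp
    qed
    show ?thesis
    proof (cases "m = q - 1")
      case True thus ?thesis using that[of "q - 2" 1] one assms(4) by simp
    next
      case False
      thus ?thesis using that[of m 0] \<open>\<not> q \<le> m\<close> by simp
    qed
  qed
  obtain R' where R': "R' \<subseteq> Sigma F V" "card R' = m'" "\<forall>j\<in>F. card {y. (j, y) \<in> R'} \<noteq> q - 1"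
    using insert.IH[OF sm(4)] insert.prems by auto
  have "s \<le> card (V i)" using sm Vi by simp
  then obtain W where W: "W \<subseteq> V i" "card W = s" "finite W" by (meson obtain_subset_with_card_n)
  define R where "R = R' \<union> {i} \<times> W"
  have disj: "R' \<inter> {i} \<times> W = {}" using R'(1) \<open>i \<notin> F\<close> by auto
  have fV: "\<And>j. j \<in> F \<Longrightarrow> finite (V j)" using insert.prems by auto
  have "finite (Sigma F V)" using \<open>finite F\<close> fV by (rule finite_SigmaI)
  with R'(1) have finR': "finite R'" by (rule finite_subset)
  have cR: "card R = m" unfolding R_def using disj finR' W sm R'
    by (simp add: card_Un_disjoint card_cartesian_product)
  have colI: "{y. (i, y) \<in> R} = W" using R'(1) \<open>i \<notin> F\<close> by (auto simp: R_def)
  have colF: "{y. (j, y) \<in> R} = {y. (j, y) \<in> R'}" if "j \<in> F" for j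
    using that \<open>i \<notin> F\<close> by (auto simp: R_def)
  show ?case
  proof (rule exI[of _ R], intro conjI)
    show "R \<subseteq> Sigma (insert i F) V" using R'(1) W by (auto simp: R_def)
    show "card R = m" by (rule cR)
    show "\<forall>j\<in>insert i F. card {y. (j, y) \<in> R} \<noteq> q - 1"
      using colI colF R'(3) W sm by auto
  qed
qed

context herm
begin

definition Col :: "'a \<Rightarrow> 'a set" where "Col x = {y. Tr y = - Nm x}"

lemma Fix_neg: "c \<in> Fix \<Longrightarrow> - c \<in> Fix" by (simp add: Fix_def frob_neg)

lemma card_Col: "card (Col x) = q"
  unfolding Col_def by (rule Tr_fiber_card) (simp add: Fix_neg Nm_Fix)

lemma Aff_Sigma: "Aff = Sigma UNIV Col"
  by (auto simp: Aff_def Col_def eq_neg_iff_add_eq_0)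

lemma card_Aff: "card Aff = q^3"
  by (simp add: Aff_Sigma card_Col cardF power3_eq_cube power2_eq_square)

lemma quad_bound:
  "card ({x. Nm (x + w) = r} \<inter> (\<lambda>t. t + e) ` Fix) \<le> 2"
proof -
  define v where "v = e + w"
  let ?p = "[:Nm v - r, Tr v, 1:]"
  have "{x. Nm (x + w) = r} \<inter> (\<lambda>t. t + e) ` Fix \<subseteq> (\<lambda>t. t + e) ` {t. poly ?p t = 0}"
  proof
    fix x assume "x \<in> {x. Nm (x + w) = r} \<inter> (\<lambda>t. t + e) ` Fix"
    then obtain t where t: "t \<in> Fix" "x = t + e" "Nm (t + e + w) = r" by auto
    have "Nm (t + v) = (t + v^q) * (t + v)" using t(1) by (simp add: Nm_def frob Fix_def)
    also have "\<dots> = t*t + t * Tr v + Nm v" by (simp add: Tr_def Nm_def algebra_simps)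
    finally have "poly ?p t = 0" using t(3) by (simp add: v_def algebra_simps)
    thus "x \<in> (\<lambda>t. t + e) ` {t. poly ?p t = 0}" using t by auto
  qed
  hence "card ({x. Nm (x + w) = r} \<inter> (\<lambda>t. t + e) ` Fix) \<le> card ((\<lambda>t. t + e) ` {t. poly ?p t = 0})"
    by (intro card_mono) auto
  also have "\<dots> \<le> card {t. poly ?p t = 0}" by (rule card_image_le) simp
  also have "\<dots> \<le> degree ?p" by (rule card_poly_roots_bound) simp
  also have "\<dots> = 2" by simp
  finally show ?thesis .
qed

lemma circle_big:
  assumes "z0 \<noteq> 0"
  shows "card {x. Nm (x + w) = Nm z0} \<ge> q + 1"
proof -
  have "{x. Nm (x + w) = Nm z0} = (\<lambda>z. z - w) ` {z. Nm z = Nm z0}"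
  proof (auto simp: image_iff)
    fix x assume "Nm (x + w) = Nm z0"
    thus "\<exists>xa. Nm xa = Nm z0 \<and> x = xa - w" by (intro exI[of _ "x + w"]) simp
  qed
  moreover have "inj (\<lambda>z::'a. z - w)" by (auto simp: inj_def)
  ultimately have "card {x. Nm (x + w) = Nm z0} = card {z. Nm z = Nm z0}"
    by (simp add: card_image inj_on_subset)
  thus ?thesis using Nm_fiber[OF assms] Nm_ker_ge by simp
qed

end


context herm
begin

lemma X_exists: "\<exists>X. card X = 2*q - 3 \<and> (\<forall>w r. card ({x. Nm (x + w) = r} \<inter> X) \<le> q - 1)"
proof -
  have "q * 1 < q * q" using q3 by (intro mult_strict_left_mono) auto
  hence "card Fix < card (UNIV :: 'a set)" using card_Fix cardF by (simp add: power2_eq_square)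
  hence "Fix \<noteq> UNIV" by auto
  then obtain d where d: "d \<notin> Fix" by blast
  define D where "D = (\<lambda>t. t + d) ` Fix"
  have "inj (\<lambda>t::'a. t + d)" by (auto simp: inj_def)
  hence cD: "card D = q" using card_Fix by (simp add: D_def card_image inj_on_subset)
  obtain E where E: "E \<subseteq> D" "card E = q - 3" "finite E"
    using cD by (metis diff_le_self obtain_subset_with_card_n)
  have disj: "Fix \<inter> E = {}"
  proof (rule ccontr)
    assume "Fix \<inter> E \<noteq> {}"
    then obtain x t where xt: "x \<in> Fix" "t \<in> Fix" "x = t + d" using E D_def by blast
    have "x - t \<in> Fix" using xt(1,2) by (rule Fix_diff)
    moreover have "x - t = d" using \<open>x = t + d\<close> by simp
    ultimately show False using d by simp
  qed
  define X where "X = Fix \<union> E"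
  have finFix: "finite Fix" by simp
  have cX: "card X = 2*q - 3" unfolding X_def using disj E card_Fix q3
    by (simp add: card_Un_disjoint)
  have bnd: "card ({x. Nm (x + w) = r} \<inter> X) \<le> q - 1" for w r
  proof -
    let ?C = "{x. Nm (x + w) = r}"
    have "?C \<inter> X = (?C \<inter> Fix) \<union> (?C \<inter> E)" by (auto simp: X_def)
    hence "card (?C \<inter> X) \<le> card (?C \<inter> Fix) + card (?C \<inter> E)" by (simp add: card_Un_le)
    moreover have "card (?C \<inter> Fix) \<le> 2"
      using quad_bound[of w r 0] by simp
    moreover have "card (?C \<inter> E) \<le> q - 3" using E by (metis card_mono inf_le2)
    moreover have "card (?C \<inter> E) \<le> 2"
    proof -
      have "card (?C \<inter> E) \<le> card (?C \<inter> D)" using E by (intro card_mono) auto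
      thus ?thesis using quad_bound[of w r d] by (simp add: D_def)
    qed
    ultimately show ?thesis using q3 by linarith
  qed
  show ?thesis using cX bnd by blast
qed

lemma gen_semioval:
  fixes X :: "'a set" and R :: "('a \<times> 'a) set" and B :: "'a vec3 set set"
  assumes Xb: "\<forall>w r. card ({x. Nm (x + w) = r} \<inter> X) \<le> q - 1"
    and RX: "R \<subseteq> Sigma X Col" and Rc: "\<forall>x\<in>X. card {y. (x, y) \<in> R} \<noteq> q - 1"
    and B: "B \<subseteq> {inf_pt}" and BR: "inf_pt \<in> B \<Longrightarrow> R = {}"
    and ne: "B \<union> (\<lambda>(x, y). ptA x y) ` (Aff - R) \<noteq> {}"
  shows "semioval (B \<union> (\<lambda>(x, y). ptA x y) ` (Aff - R))"
proof (rule semioval_constr[OF _ B _ _ _ ne])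
  show "Aff - R \<subseteq> Aff" by auto
next
  fix x y assume xy: "(x, y) \<in> Aff - R"
  define Rc where "Rc = {y'. (x, y') \<in> R}"
  have yC: "y \<in> Col x" using xy by (simp add: Aff_Sigma)
  have sub: "Rc \<subseteq> Col x - {y}" using RX xy by (auto simp: Rc_def)
  have finC: "finite (Col x)" by simp
  have c1: "card (Col x - {y}) = q - 1" using yC card_Col by simp
  have "card Rc \<le> q - 1" using card_mono[OF _ sub] c1 by simp
  moreover have "card Rc \<noteq> q - 1"
  proof (cases "x \<in> X")
    case True thus ?thesis using Rc by (simp add: Rc_def)
  next
    case False
    hence "Rc = {}" using RX by (auto simp: Rc_def)
    thus ?thesis using q3 by simp
  qed
  ultimately have "card Rc \<le> q - 2" by linarith
  moreover have "Rc \<subseteq> Col x" using sub by auto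
  ultimately have "card (Col x - Rc) \<ge> 2" using card_Col q3
    by (simp add: card_Diff_subset rev_finite_subset)
  hence "card (Col x - Rc - {y}) \<ge> 1"
  proof (cases "y \<in> Col x - Rc")
    case True thus ?thesis using card_Diff_singleton_if[of "Col x - Rc" y] \<open>card (Col x - Rc) \<ge> 2\<close> by simp
  next
    case False thus ?thesis using \<open>card (Col x - Rc) \<ge> 2\<close> by simp
  qed
  then obtain y' where "y' \<in> Col x - Rc - {y}" by (metis card.empty ex_in_conv not_one_le_zero)
  thus "\<exists>y'. y' \<noteq> y \<and> (x, y') \<in> Aff - R" by (auto simp: Rc_def Aff_Sigma)
next
  assume "inf_pt \<in> B"
  hence "R = {}" by (rule BR)
  show "\<forall>x. \<exists>y. (x, y) \<in> Aff - R"
  proof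
    fix x
    have "Col x \<noteq> {}" using card_Col[of x] q3 by auto
    thus "\<exists>y. (x, y) \<in> Aff - R" using \<open>R = {}\<close> by (auto simp: Aff_Sigma)
  qed
next
  fix a b x0 assume x0: "(x0, a*x0 + b) \<in> Aff - R" and nz: "Nm (x0 + a^q) \<noteq> 0"
  define C where "C = {x. Nm (x + a^q) = Nm (x0 + a^q)}"
  have "x0 + a^q \<noteq> 0" using nz Nm_0 by simp
  hence cC: "card C \<ge> q + 1" unfolding C_def by (rule circle_big)
  have cCX: "card (C \<inter> X) \<le> q - 1" using Xb by (simp add: C_def)
  have "C = (C \<inter> X) \<union> (C - X)" by auto
  hence "card C = card (C \<inter> X) + card (C - X)"
    by (metis Diff_disjoint card_Un_disjoint finite inf_sup_aci(1) inf_sup_absorb Int_Diff_disjoint)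
  hence "card (C - X) \<ge> 2" using cC cCX q3 by linarith
  hence "card (C - X - {x0}) \<ge> 1"
  proof (cases "x0 \<in> C - X")
    case True thus ?thesis using card_Diff_singleton_if[of "C - X" x0] \<open>card (C - X) \<ge> 2\<close> by simp
  next
    case False thus ?thesis using \<open>card (C - X) \<ge> 2\<close> by simp
  qed
  then obtain x where x: "x \<in> C - X - {x0}" by (metis card.empty ex_in_conv not_one_le_zero)
  have "Tr (a*x + b) + Nm x = Tr (a*x0 + b) + Nm x0"
    using key_id[of a x b] key_id[of a x0 b] x by (simp add: C_def)
  hence "(x, a*x + b) \<in> Aff" using x0 by (simp add: Aff_def)
  moreover have "(x, a*x + b) \<notin> R" using x RX by auto
  ultimately show "\<exists>x'. x' \<noteq> x0 \<and> (x', a*x' + b) \<in> Aff - R" using x by auto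
qed

lemma card_S:
  assumes "B \<subseteq> {inf_pt}"
  shows "card (B \<union> (\<lambda>(x, y). ptA x y) ` (Aff - R)) = card B + card (Aff - R)"
proof -
  have fB: "finite B" using assms finite_subset by blast
  have inj: "inj_on (\<lambda>(x, y). ptA x y) (Aff - R)"
    by (auto simp: inj_on_def dest: ptA_inj)
  have nb: "ptA x y \<notin> B" for x y using assms ptA_ne_inf by blast
  have "B \<inter> (\<lambda>(x, y). ptA x y) ` (Aff - R) = {}" using nb by auto
  thus ?thesis using fB inj by (simp add: card_Un_disjoint card_image)
qed


lemma main_loc:
  assumes k1: "k \<le> q^3 + 1" and k2: "int q^3 \<le> int k + 2*int q^2 - 3*int q - 2"
  shows "\<exists>S :: 'a vec3 set set. semioval S \<and> S \<subseteq> hermitian_curve q \<and> card S = k"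
proof -
  obtain X :: "'a set" where X: "card X = 2*q - 3" "\<forall>w r. card ({x. Nm (x + w) = r} \<inter> X) \<le> q - 1"
    using X_exists by blast
  have HS: "B \<union> (\<lambda>(x, y). ptA x y) ` (Aff - R) \<subseteq> hermitian_curve q" if "B \<subseteq> {inf_pt}" for B R
    using that inf_in_H ptA_in_H by auto
  show ?thesis
  proof (cases "k = q^3 + 1")
    case True
    let ?S = "{inf_pt} \<union> (\<lambda>(x, y). ptA x y) ` (Aff - {})"
    have "semioval ?S" by (rule gen_semioval[OF X(2)]) (use q3 in auto)
    moreover have "card ?S = k" using card_S[of "{inf_pt}" "{}"] True card_Aff by simp
    ultimately show ?thesis using HS[of "{inf_pt}" "{}"] by blast
  next
    case False
    hence kq: "k \<le> q^3" using k1 by simp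
    have a9: "9 \<le> (2*q-3)*q" using q3 mult_le_mono[of 3 "2*q-3" 3 q] by simp
    have "int (q^3 - k) \<le> int ((2*q-3)*q - 2)"
    proof -
      have "int ((2*q-3)*q - 2) = (2*int q - 3) * int q - 2" using a9 q3
        by (simp add: of_nat_diff)
      also have "\<dots> = 2*int q^2 - 3*int q - 2" by (simp add: power2_eq_square algebra_simps)
      finally show ?thesis using kq k2 by (simp add: of_nat_diff)
    qed
    hence m: "q^3 - k \<le> card X * q - 2" using X(1) by simp
    have finX: "finite X" by simp
    have neX: "X \<noteq> {}" using X(1) q3 by auto
    obtain R where R: "R \<subseteq> Sigma X Col" "card R = q^3 - k" "\<forall>x\<in>X. card {y. (x, y) \<in> R} \<noteq> q - 1"
      using removal[OF finX neX _ q3 m, of Col] card_Col by auto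
    let ?S = "{} \<union> (\<lambda>(x, y). ptA x y) ` (Aff - R)"
    have RA: "R \<subseteq> Aff" using R(1) by (auto simp: Aff_Sigma)
    have cS: "card ?S = k" using card_S[of "{}" R] card_Aff R(2) RA kq
      by (simp add: card_Diff_subset rev_finite_subset)
    have "k > 0"
    proof -
      have a: "3 * (int q)^2 \<le> int q * (int q)^2" by (rule mult_right_mono) (use q3 in auto)
      have b: "int q ^ 3 = int q * (int q)^2" by (simp add: power3_eq_cube power2_eq_square)
      have c: "0 \<le> (int q)^2" by simp
      have "int k > 0" using a b c k2 q3 by linarith
      thus ?thesis by simp
    qed
    have "?S \<noteq> {}"
    proof
      assume e: "?S = {}"
      have "card ?S = 0" by (simp only: e card.empty)
      thus False using cS \<open>k > 0\<close> by linarith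
    qed
    hence "semioval ?S" by (intro gen_semioval[OF X(2) R(1) R(3)]) auto
    thus ?thesis using cS HS[of "{}" R] by blast
  qed
qed

end

theorem mainTheorem4:
  fixes q k :: nat
  assumes "\<exists>p n. prime p \<and> n > 0 \<and> q = p ^ n"
    and "q \<ge> 3"
    and "card (UNIV :: 'a set) = q ^ 2"
    and "k \<le> q ^ 3 + 1"
    and "even q \<Longrightarrow> int k \<ge> int q ^ 3 - 2 * int q ^ 2 + 4 * int q + 1"
    and "odd q \<Longrightarrow> int k \<ge> int q ^ 3 - 2 * int q ^ 2 + 5 * int q - 2"
  shows "\<exists>S :: ('a::{finite, field}) vec3 set set. semioval S \<and> S \<subseteq> hermitian_curve q \<and> card S = k"
proof -
  obtain p n where pn: "prime p" "n > 0" "q = p ^ n" using assms(1) by blast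
  have fin: "finite (UNIV :: 'a set)" by simp
  have pc: "prime CHAR('a)"
    using prime_CHAR_semidom[where ?'a = 'a] finite_imp_CHAR_pos[OF fin] by blast
  have "CHAR('a) dvd card (UNIV :: 'a set)" by (rule CHAR_dvd_CARD)
  hence "CHAR('a) dvd p ^ (n * 2)" using assms(3) pn(3) by (simp add: power_mult)
  hence "CHAR('a) dvd p" using pc prime_dvd_power by blast
  hence cp: "CHAR('a) = p" using pc pn(1) by (simp add: primes_dvd_imp_eq)
  have frob: "(x + y) ^ q = x ^ q + y ^ q" for x y :: 'a
    by (rule freshmans_dream'[OF pc]) (simp add: cp pn(3))
  interpret herm q "TYPE('a)"
    by unfold_locales (use assms(2,3) frob in auto)
  have "int q ^ 3 \<le> int k + 2 * int q ^ 2 - 3 * int q - 2"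
  proof (cases "even q")
    case True thus ?thesis using assms(5) assms(2) by linarith
  next
    case False thus ?thesis using assms(6) assms(2) by linarith
  qed
  thus ?thesis using main_loc assms(4) by blast
qed



end
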